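(* Let $(\mathfrak g,[\cdot,\cdot],\alpha,\varepsilon)$ be a color Hom-Lie algebra and $\rho$ a representation of $\mathfrak g$ on $(M,\beta)$. Let $\delta^1:\mathscr C^1(\mathfrak g,M)\to\mathscr C^2(\mathfrak g,M)$ and $\delta^2:\mathscr C^2(\mathfrak g,M)\to\mathscr C^3(\mathfrak g,M)$ be defined, for homogeneous $\varphi$ and homogeneous $x_0,x_1,x_2\in\mathfrak g$, by $\delta^1\varphi(x_0,x_1)=\varepsilon(\varphi,x_0)\rho(x_0)(\varphi(x_1))-\varepsilon(\varphi+x_0,x_1)\rho(x_1)(\varphi(x_0))-\varphi([x_0,x_1])$, $\delta^2\varphi(x_0,x_1,x_2)=\varepsilon(\varphi,x_0)\rho(\alpha(x_0))(\varphi(x_1,x_2))-\varepsilon(\varphi+x_0,x_1)\rho(\alpha(x_1))(\varphi(x_0,x_2))+\varepsilon(\varphi+x_0+x_1,x_2)\rho(\alpha(x_2))(\varphi(x_0,x_1))-\varphi([x_0,x_1],\alpha(x_2))+\varepsilon(x_1,x_2)\varphi([x_0,x_2],\alpha(x_1))+\varphi(\alpha(x_0),[x_1,x_2])$. Then $\delta^2\circ\delta^1=0$.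
   Context: $\mathbb K$ is a field of characteristic zero and $\Gamma$ an abelian group. A bicharacter is a map $\varepsilon:\Gamma\times\Gamma\to\mathbb K\setminus\{0\}$ with $\varepsilon(a,b)\varepsilon(b,a)=1$, $\varepsilon(a,b+c)=\varepsilon(a,b)\varepsilon(a,c)$, $\varepsilon(a+b,c)=\varepsilon(a,c)\varepsilon(b,c)$; for homogeneous objects $\varepsilon(x,y)=\varepsilon(\deg x,\deg y)$. A color Hom-Lie algebra $(\mathfrak g,[\cdot,\cdot],\alpha,\varepsilon)$: $\Gamma$-graded space, even bilinear bracket, even linear $\alpha$, with $[x,y]=-\varepsilon(x,y)[y,x]$ and $\varepsilon(z,x)[\alpha(x),[y,z]]+\varepsilon(x,y)[\alpha(y),[z,x]]+\varepsilon(y,z)[\alpha(z),[x,y]]=0$. A representation of $\mathfrak g$ on $(M,\beta)$ ($M$ $\Gamma$-graded, $\beta:M\to M$ even linear) is an even linear $\rho:\mathfrak g\to\mathfrak{gl}(M)$ with $\rho([x,y])\circ\beta=\rho(\alpha(x))\circ\rho(y)-\varepsilon(x,y)\rho(\alpha(y))\circ\rho(x)$. For $n\ge1$, $\mathscr C^n(\mathfrak g,M)$ is the graded space of $\varepsilon$-alternating multilinear maps $\varphi:\wedge^n\mathfrak g\to M$ (sums of homogeneous ones) satisfying $\varphi\circ\alpha^{\otimes n}=\beta\circ\varphi$. *)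

theory Defs
  imports Main "HOL.Vector_Spaces"
begin

text \<open>The space is the direct sum of the G gamma: every vector has a unique decomposition
  into finitely many nonzero homogeneous components.\<close>

definition graded :: "('k::field \<Rightarrow> 'v::ab_group_add \<Rightarrow> 'v) \<Rightarrow> ('g \<Rightarrow> 'v set) \<Rightarrow> bool" where
  "graded sc G \<longleftrightarrow> vector_space sc \<and> (\<forall>\<gamma>. 0 \<in> G \<gamma> \<and> (\<forall>x\<in>G \<gamma>. \<forall>y\<in>G \<gamma>. x + y \<in> G \<gamma>) \<and>
        (\<forall>c. \<forall>x\<in>G \<gamma>. sc c x \<in> G \<gamma>)) \<and>
     (\<forall>x. \<exists>!c. finite {\<gamma>. c \<gamma> \<noteq> 0} \<and> (\<forall>\<gamma>. c \<gamma> \<in> G \<gamma>) \<and> x = (\<Sum>\<gamma>\<in>{\<gamma>. c \<gamma> \<noteq> 0}. c \<gamma>))"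

definition comp :: "('g \<Rightarrow> 'v::ab_group_add set) \<Rightarrow> 'g \<Rightarrow> 'v \<Rightarrow> 'v" where
  "comp G \<gamma> x = (THE c. finite {\<gamma>. c \<gamma> \<noteq> 0} \<and> (\<forall>\<gamma>. c \<gamma> \<in> G \<gamma>) \<and> x = (\<Sum>\<gamma>\<in>{\<gamma>. c \<gamma> \<noteq> 0}. c \<gamma>)) \<gamma>"

definition supp :: "('g \<Rightarrow> 'v::ab_group_add set) \<Rightarrow> 'v \<Rightarrow> 'g set" where
  "supp G x = {\<gamma>. comp G \<gamma> x \<noteq> 0}"

definition bicharacter :: "('g::ab_group_add \<Rightarrow> 'g \<Rightarrow> 'k::field) \<Rightarrow> bool" where
  "bicharacter eps \<longleftrightarrow> (\<forall>a b c. eps a b \<noteq> 0 \<and> eps a b * eps b a = 1 \<and>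
     eps a (b + c) = eps a b * eps a c \<and> eps (a + b) c = eps a c * eps b c)"

definition even_linear ::
  "('k::field \<Rightarrow> 'v::ab_group_add \<Rightarrow> 'v) \<Rightarrow> ('k \<Rightarrow> 'w::ab_group_add \<Rightarrow> 'w) \<Rightarrow>
   ('g \<Rightarrow> 'v set) \<Rightarrow> ('g \<Rightarrow> 'w set) \<Rightarrow> ('v \<Rightarrow> 'w) \<Rightarrow> bool" where
  "even_linear s1 s2 G1 G2 f \<longleftrightarrow> Vector_Spaces.linear s1 s2 f \<and> (\<forall>\<gamma> x. x \<in> G1 \<gamma> \<longrightarrow> f x \<in> G2 \<gamma>)"

definition even_bilinear ::
  "('k::field \<Rightarrow> 'v::ab_group_add \<Rightarrow> 'v) \<Rightarrow> ('g::ab_group_add \<Rightarrow> 'v set) \<Rightarrow> ('v \<Rightarrow> 'v \<Rightarrow> 'v) \<Rightarrow> bool" where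
  "even_bilinear sc G br \<longleftrightarrow> (\<forall>x. Vector_Spaces.linear sc sc (br x)) \<and>
     (\<forall>y. Vector_Spaces.linear sc sc (\<lambda>x. br x y)) \<and>
     (\<forall>a b x y. x \<in> G a \<longrightarrow> y \<in> G b \<longrightarrow> br x y \<in> G (a + b))"

text \<open>Color Hom-Lie algebra (g, [.,.], alpha, eps); the identities are imposed on
  homogeneous elements (x in G a means x homogeneous of degree a).\<close>

definition color_hom_lie ::
  "('k::field \<Rightarrow> 'v::ab_group_add \<Rightarrow> 'v) \<Rightarrow> ('g::ab_group_add \<Rightarrow> 'v set) \<Rightarrow> ('v \<Rightarrow> 'v \<Rightarrow> 'v) \<Rightarrow>
   ('v \<Rightarrow> 'v) \<Rightarrow> ('g \<Rightarrow> 'g \<Rightarrow> 'k) \<Rightarrow> bool" where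
  "color_hom_lie sc G br \<alpha> eps \<longleftrightarrow> graded sc G \<and> bicharacter eps \<and> even_bilinear sc G br \<and>
     even_linear sc sc G G \<alpha> \<and>
     (\<forall>a b x y. x \<in> G a \<longrightarrow> y \<in> G b \<longrightarrow> br x y = - sc (eps a b) (br y x)) \<and>
     (\<forall>a b c x y z. x \<in> G a \<longrightarrow> y \<in> G b \<longrightarrow> z \<in> G c \<longrightarrow>
        sc (eps c a) (br (\<alpha> x) (br y z)) + sc (eps a b) (br (\<alpha> y) (br z x))
        + sc (eps b c) (br (\<alpha> z) (br x y)) = 0)"

definition representation ::
  "('k::field \<Rightarrow> 'v::ab_group_add \<Rightarrow> 'v) \<Rightarrow> ('g::ab_group_add \<Rightarrow> 'v set) \<Rightarrow> ('v \<Rightarrow> 'v \<Rightarrow> 'v) \<Rightarrow>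
   ('v \<Rightarrow> 'v) \<Rightarrow> ('g \<Rightarrow> 'g \<Rightarrow> 'k) \<Rightarrow>
   ('k \<Rightarrow> 'm::ab_group_add \<Rightarrow> 'm) \<Rightarrow> ('g \<Rightarrow> 'm set) \<Rightarrow> ('m \<Rightarrow> 'm) \<Rightarrow> ('v \<Rightarrow> 'm \<Rightarrow> 'm) \<Rightarrow> bool" where
  "representation sc G br \<alpha> eps sm GM \<beta> \<rho> \<longleftrightarrow> graded sm GM \<and> even_linear sm sm GM GM \<beta> \<and>
     (\<forall>m. Vector_Spaces.linear sc sm (\<lambda>x. \<rho> x m)) \<and>
     (\<forall>x. Vector_Spaces.linear sm sm (\<rho> x)) \<and>
     (\<forall>a b x m. x \<in> G a \<longrightarrow> m \<in> GM b \<longrightarrow> \<rho> x m \<in> GM (a + b)) \<and>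
     (\<forall>a b x y m. x \<in> G a \<longrightarrow> y \<in> G b \<longrightarrow>
        \<rho> (br x y) (\<beta> m) = \<rho> (\<alpha> x) (\<rho> y m) - sm (eps a b) (\<rho> (\<alpha> y) (\<rho> x m)))"

text \<open>phi is a homogeneous element of degree d of C^1(g, M): a linear map g -> M
  (eps-alternation is vacuous for n = 1) with phi o alpha = beta o phi, mapping
  G a into GM (d + a).\<close>

definition cochain1_hom ::
  "('k::field \<Rightarrow> 'v::ab_group_add \<Rightarrow> 'v) \<Rightarrow> ('g::ab_group_add \<Rightarrow> 'v set) \<Rightarrow> ('v \<Rightarrow> 'v) \<Rightarrow>
   ('k \<Rightarrow> 'm::ab_group_add \<Rightarrow> 'm) \<Rightarrow> ('g \<Rightarrow> 'm set) \<Rightarrow> ('m \<Rightarrow> 'm) \<Rightarrow> ('v \<Rightarrow> 'm) \<Rightarrow> 'g \<Rightarrow> bool" where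
  "cochain1_hom sc G \<alpha> sm GM \<beta> \<phi> d \<longleftrightarrow> Vector_Spaces.linear sc sm \<phi> \<and>
     (\<forall>x. \<phi> (\<alpha> x) = \<beta> (\<phi> x)) \<and> (\<forall>a x. x \<in> G a \<longrightarrow> \<phi> x \<in> GM (d + a))"

text \<open>delta^1 of a homogeneous phi of degree d, given on homogeneous arguments by the
  paper's formula and extended multilinearly via the homogeneous decomposition.\<close>

definition delta1 ::
  "('g::ab_group_add \<Rightarrow> 'v::ab_group_add set) \<Rightarrow> ('v \<Rightarrow> 'v \<Rightarrow> 'v) \<Rightarrow> ('g \<Rightarrow> 'g \<Rightarrow> 'k::field) \<Rightarrow>
   ('k \<Rightarrow> 'm::ab_group_add \<Rightarrow> 'm) \<Rightarrow> ('v \<Rightarrow> 'm \<Rightarrow> 'm) \<Rightarrow> ('v \<Rightarrow> 'm) \<Rightarrow> 'g \<Rightarrow> 'v \<Rightarrow> 'v \<Rightarrow> 'm" where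
  "delta1 G br eps sm \<rho> \<phi> d x0 x1 =
     (\<Sum>a0\<in>supp G x0. \<Sum>a1\<in>supp G x1.
        let y0 = comp G a0 x0; y1 = comp G a1 x1 in
        sm (eps d a0) (\<rho> y0 (\<phi> y1)) - sm (eps (d + a0) a1) (\<rho> y1 (\<phi> y0)) - \<phi> (br y0 y1))"

definition delta2 ::
  "('g::ab_group_add \<Rightarrow> 'v::ab_group_add set) \<Rightarrow> ('v \<Rightarrow> 'v \<Rightarrow> 'v) \<Rightarrow> ('v \<Rightarrow> 'v) \<Rightarrow> ('g \<Rightarrow> 'g \<Rightarrow> 'k::field) \<Rightarrow>
   ('k \<Rightarrow> 'm::ab_group_add \<Rightarrow> 'm) \<Rightarrow> ('v \<Rightarrow> 'm \<Rightarrow> 'm) \<Rightarrow> ('v \<Rightarrow> 'v \<Rightarrow> 'm) \<Rightarrow> 'g \<Rightarrow>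
   'v \<Rightarrow> 'v \<Rightarrow> 'v \<Rightarrow> 'm" where
  "delta2 G br \<alpha> eps sm \<rho> \<psi> e x0 x1 x2 =
     (\<Sum>a0\<in>supp G x0. \<Sum>a1\<in>supp G x1. \<Sum>a2\<in>supp G x2.
        let y0 = comp G a0 x0; y1 = comp G a1 x1; y2 = comp G a2 x2 in
        sm (eps e a0) (\<rho> (\<alpha> y0) (\<psi> y1 y2))
        - sm (eps (e + a0) a1) (\<rho> (\<alpha> y1) (\<psi> y0 y2))
        + sm (eps (e + a0 + a1) a2) (\<rho> (\<alpha> y2) (\<psi> y0 y1))
        - \<psi> (br y0 y1) (\<alpha> y2)
        + sm (eps a1 a2) (\<psi> (br y0 y2) (\<alpha> y1))
        + \<psi> (\<alpha> y0) (br y1 y2))"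

end

theory Submission
  imports Defs
begin

lemma aux_neg: fixes X :: "'a::ab_group_add" shows "- X = Y + Z \<Longrightarrow> - Z = X + Y"
proof -
  assume h: "- X = Y + Z"
  have "X = - (Y + Z)" using h by (metis minus_minus)
  thus ?thesis by simp
qed

lemma core:
  fixes sm :: "'k::field \<Rightarrow> 'm::ab_group_add \<Rightarrow> 'm" and eps :: "'g::ab_group_add \<Rightarrow> 'g \<Rightarrow> 'k"
    and sc :: "'k \<Rightarrow> 'v::ab_group_add \<Rightarrow> 'v" and d :: 'g
  assumes VM: "vector_space sm"
    and bic: "bicharacter eps"
    and rho_add: "\<And>w u v. \<rho> w (u + v) = \<rho> w u + \<rho> w v"
    and rho_sc: "\<And>w k u. \<rho> w (sm k u) = sm k (\<rho> w u)"
    and phi_add: "\<And>u v. \<phi> (u + v) = \<phi> u + \<phi> v"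
    and phi_sc: "\<And>k u. \<phi> (sc k u) = sm k (\<phi> u)"
    and phi_alpha: "\<And>u. \<phi> (\<alpha> u) = \<beta> (\<phi> u)"
    and rep: "\<And>a b x y m. x \<in> G a \<Longrightarrow> y \<in> G b \<Longrightarrow>
        \<rho> (br x y) (\<beta> m) = \<rho> (\<alpha> x) (\<rho> y m) - sm (eps a b) (\<rho> (\<alpha> y) (\<rho> x m))"
    and asym: "\<And>a b x y. x \<in> G a \<Longrightarrow> y \<in> G b \<Longrightarrow> br x y = - sc (eps a b) (br y x)"
    and jac: "\<And>a b c x y z. x \<in> G a \<Longrightarrow> y \<in> G b \<Longrightarrow> z \<in> G c \<Longrightarrow>
        sc (eps c a) (br (\<alpha> x) (br y z)) + sc (eps a b) (br (\<alpha> y) (br z x))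
        + sc (eps b c) (br (\<alpha> z) (br x y)) = 0"
    and brG: "\<And>a b x y. x \<in> G a \<Longrightarrow> y \<in> G b \<Longrightarrow> br x y \<in> G (a + b)"
    and alG: "\<And>a x. x \<in> G a \<Longrightarrow> \<alpha> x \<in> G a"
    and brsc: "\<And>u k v. br u (sc k v) = sc k (br u v)"
    and brneg: "\<And>u v. br u (- v) = - br u v"
    and x: "x \<in> G a" and y: "y \<in> G b" and z: "z \<in> G c"
  defines "F \<equiv> \<lambda>p q u v. sm (eps d p) (\<rho> u (\<phi> v)) - sm (eps (d + p) q) (\<rho> v (\<phi> u)) - \<phi> (br u v)"
  shows "sm (eps d a) (\<rho> (\<alpha> x) (F b c y z)) - sm (eps (d + a) b) (\<rho> (\<alpha> y) (F a c x z))
       + sm (eps (d + a + b) c) (\<rho> (\<alpha> z) (F a b x y)) - F (a + b) c (br x y) (\<alpha> z)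
       + sm (eps b c) (F (a + c) b (br x z) (\<alpha> y)) + F a (b + c) (\<alpha> x) (br y z) = 0"
proof -
  interpret M: vector_space sm by (rule VM)
  have el: "\<And>p q r. eps (p + q) r = eps p r * eps q r"
   and er: "\<And>p q r. eps p (q + r) = eps p q * eps p r"
   and einv: "\<And>p q. eps p q * eps q p = 1"
   and enz: "\<And>p q. eps p q \<noteq> 0"
    using bic unfolding bicharacter_def by auto
  have rho0: "\<And>w. \<rho> w 0 = 0" using rho_add[of _ 0 0] by simp
  have rho_neg: "\<And>w u. \<rho> w (- u) = - \<rho> w u"
    using rho_add[of _ _ "- _"] rho0 by (metis add.right_inverse add_eq_0_iff)
  have rho_diff: "\<And>w u v. \<rho> w (u - v) = \<rho> w u - \<rho> w v"
    using rho_add[of _ _ "- _"] rho_neg by simp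
  have phi0: "\<phi> 0 = 0" using phi_add[of 0 0] by simp
  have phi_neg: "\<And>u. \<phi> (- u) = - \<phi> u"
    using phi_add[of _ "- _"] phi0 by (metis add.right_inverse add_eq_0_iff)
  have D: "\<phi> (br (br x y) (\<alpha> z)) - sm (eps b c) (\<phi> (br (br x z) (\<alpha> y))) - \<phi> (br (\<alpha> x) (br y z)) = 0"
  proof -
    have j: "\<phi> (sc (eps c a) (br (\<alpha> x) (br y z)) + sc (eps a b) (br (\<alpha> y) (br z x))
        + sc (eps b c) (br (\<alpha> z) (br x y))) = 0" using jac[OF x y z] phi0 by simp
    have a1: "br (br x y) (\<alpha> z) = - sc (eps (a+b) c) (br (\<alpha> z) (br x y))"
      using asym[OF brG[OF x y] alG[OF z]] .
    have a2: "br (br x z) (\<alpha> y) = - sc (eps (a+c) b) (br (\<alpha> y) (br x z))"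
      using asym[OF brG[OF x z] alG[OF y]] .
    have a3: "br x z = - sc (eps a c) (br z x)" using asym[OF x z] .
    have j2: "sm (eps c a) (\<phi> (br (\<alpha> x) (br y z))) + sm (eps a b) (\<phi> (br (\<alpha> y) (br z x)))
        + sm (eps b c) (\<phi> (br (\<alpha> z) (br x y))) = 0" using j by (simp add: phi_add phi_sc)
    have L: "\<phi> (br (br x y) (\<alpha> z)) - sm (eps b c) (\<phi> (br (br x z) (\<alpha> y))) - \<phi> (br (\<alpha> x) (br y z))
      = - sm (eps (a+b) c) (\<phi> (br (\<alpha> z) (br x y))) - sm (eps b c * (eps (a+c) b * eps a c)) (\<phi> (br (\<alpha> y) (br z x)))
        - \<phi> (br (\<alpha> x) (br y z))"
      unfolding a1 a2 by (simp add: a3 phi_neg phi_sc brsc brneg)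
    have c1: "eps (a+b) c = eps a c * eps b c" by (simp add: el)
    have c2: "eps b c * (eps (a+c) b * eps a c) = eps a c * eps a b"
    proof -
      have "eps b c * (eps (a+c) b * eps a c) = (eps b c * eps c b) * (eps a b * eps a c)"
        by (simp add: el algebra_simps)
      also have "\<dots> = eps a c * eps a b" using einv[of b c] by simp
      finally show ?thesis .
    qed
    have c3: "eps a c * eps c a = 1" by (rule einv)
    have "sm (- eps a c) (sm (eps c a) (\<phi> (br (\<alpha> x) (br y z))) + sm (eps a b) (\<phi> (br (\<alpha> y) (br z x)))
        + sm (eps b c) (\<phi> (br (\<alpha> z) (br x y)))) = 0" using j2 by simp
    then show ?thesis unfolding L c1 c2 using c3
      apply (simp add: algebra_simps)
      apply (rule aux_neg, assumption)
      done
  qed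
  have D': "\<phi> (br (br x y) (\<alpha> z)) = sm (eps b c) (\<phi> (br (br x z) (\<alpha> y))) + \<phi> (br (\<alpha> x) (br y z))"
    using D by (simp add: algebra_simps)
  show ?thesis
    unfolding F_def
    apply (simp add: rho_diff rho_sc M.scale_right_diff_distrib phi_alpha rep[OF x y] rep[OF x z] rep[OF y z] D')
    apply (simp add: el er algebra_simps einv)
    done
qed

lemma graded_ex1:
  assumes "graded sc G"
  shows "\<exists>!c. finite {\<gamma>. c \<gamma> \<noteq> 0} \<and> (\<forall>\<gamma>. c \<gamma> \<in> G \<gamma>) \<and> x = (\<Sum>\<gamma>\<in>{\<gamma>. c \<gamma> \<noteq> 0}. c \<gamma>)"
  using assms unfolding graded_def by blast

lemma comp_in:
  assumes "graded sc G"
  shows "comp G \<gamma> x \<in> G \<gamma>"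
proof -
  have "finite {\<gamma>. (THE c. finite {\<gamma>. c \<gamma> \<noteq> 0} \<and> (\<forall>\<gamma>. c \<gamma> \<in> G \<gamma>) \<and> x = (\<Sum>\<gamma>\<in>{\<gamma>. c \<gamma> \<noteq> 0}. c \<gamma>)) \<gamma> \<noteq> 0} \<and>
     (\<forall>\<gamma>. (THE c. finite {\<gamma>. c \<gamma> \<noteq> 0} \<and> (\<forall>\<gamma>. c \<gamma> \<in> G \<gamma>) \<and> x = (\<Sum>\<gamma>\<in>{\<gamma>. c \<gamma> \<noteq> 0}. c \<gamma>)) \<gamma> \<in> G \<gamma>) \<and>
     x = (\<Sum>\<gamma>\<in>{\<gamma>. (THE c. finite {\<gamma>. c \<gamma> \<noteq> 0} \<and> (\<forall>\<gamma>. c \<gamma> \<in> G \<gamma>) \<and> x = (\<Sum>\<gamma>\<in>{\<gamma>. c \<gamma> \<noteq> 0}. c \<gamma>)) \<gamma> \<noteq> 0}.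
        (THE c. finite {\<gamma>. c \<gamma> \<noteq> 0} \<and> (\<forall>\<gamma>. c \<gamma> \<in> G \<gamma>) \<and> x = (\<Sum>\<gamma>\<in>{\<gamma>. c \<gamma> \<noteq> 0}. c \<gamma>)) \<gamma>)"
    by (rule theI'[OF graded_ex1[OF assms]])
  thus ?thesis unfolding comp_def by blast
qed

lemma comp_hom:
  assumes gr: "graded sc G" and y: "y \<in> G a"
  shows "comp G \<gamma> y = (if \<gamma> = a then y else 0)"
proof -
  define c0 where "c0 = (\<lambda>\<gamma>. if \<gamma> = a then y else 0)"
  have zero: "\<And>\<gamma>. 0 \<in> G \<gamma>" using gr unfolding graded_def by blast
  have S: "{\<gamma>. c0 \<gamma> \<noteq> 0} = (if y = 0 then {} else {a})" unfolding c0_def by auto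
  have P: "finite {\<gamma>. c0 \<gamma> \<noteq> 0} \<and> (\<forall>\<gamma>. c0 \<gamma> \<in> G \<gamma>) \<and> y = (\<Sum>\<gamma>\<in>{\<gamma>. c0 \<gamma> \<noteq> 0}. c0 \<gamma>)"
    unfolding S using y zero by (auto simp: c0_def)
  have "(THE c. finite {\<gamma>. c \<gamma> \<noteq> 0} \<and> (\<forall>\<gamma>. c \<gamma> \<in> G \<gamma>) \<and> y = (\<Sum>\<gamma>\<in>{\<gamma>. c \<gamma> \<noteq> 0}. c \<gamma>)) = c0"
    using the1_equality[where P="\<lambda>c. finite {\<gamma>. c \<gamma> \<noteq> 0} \<and> (\<forall>\<gamma>. c \<gamma> \<in> G \<gamma>) \<and> y = (\<Sum>\<gamma>\<in>{\<gamma>. c \<gamma> \<noteq> 0}. c \<gamma>)", OF graded_ex1[OF gr, of y] P] .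
  thus ?thesis unfolding comp_def c0_def by simp
qed

lemma supp_hom:
  assumes gr: "graded sc G" and y: "y \<in> G a"
  shows "supp G y = (if y = 0 then {} else {a})"
  unfolding supp_def comp_hom[OF gr y] by auto

lemma delta1_hom:
  assumes gr: "graded sc G" and y0: "y0 \<in> G a0" and y1: "y1 \<in> G a1"
    and z1: "\<And>m. \<rho> 0 m = 0" and z2: "\<And>w. \<rho> w 0 = 0" and z3: "\<phi> 0 = 0"
    and z4: "\<And>v. br 0 v = 0" and z5: "\<And>u. br u 0 = 0" and z6: "\<And>k. sm k 0 = 0"
  shows "delta1 G br eps sm \<rho> \<phi> d y0 y1 =
     sm (eps d a0) (\<rho> y0 (\<phi> y1)) - sm (eps (d + a0) a1) (\<rho> y1 (\<phi> y0)) - \<phi> (br y0 y1)"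
  unfolding delta1_def supp_hom[OF gr y0] supp_hom[OF gr y1] comp_hom[OF gr y0] comp_hom[OF gr y1]
  by (simp add: z1 z2 z3 z4 z5 z6)

theorem mainTheorem9:
  fixes sc :: "'k::field_char_0 \<Rightarrow> 'v::ab_group_add \<Rightarrow> 'v"
    and G :: "'g::ab_group_add \<Rightarrow> 'v set"
    and br :: "'v \<Rightarrow> 'v \<Rightarrow> 'v" and \<alpha> :: "'v \<Rightarrow> 'v"
    and eps :: "'g \<Rightarrow> 'g \<Rightarrow> 'k"
    and sm :: "'k \<Rightarrow> 'm::ab_group_add \<Rightarrow> 'm" and GM :: "'g \<Rightarrow> 'm set"
    and \<beta> :: "'m \<Rightarrow> 'm" and \<rho> :: "'v \<Rightarrow> 'm \<Rightarrow> 'm"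
    and \<phi> :: "'v \<Rightarrow> 'm" and d :: 'g
  assumes "color_hom_lie sc G br \<alpha> eps"
    and "representation sc G br \<alpha> eps sm GM \<beta> \<rho>"
    and "cochain1_hom sc G \<alpha> sm GM \<beta> \<phi> d"
  shows "delta2 G br \<alpha> eps sm \<rho> (delta1 G br eps sm \<rho> \<phi> d) d x0 x1 x2 = 0"
proof -
  have A: "graded sc G \<and> bicharacter eps \<and> even_bilinear sc G br \<and> even_linear sc sc G G \<alpha> \<and>
     (\<forall>a b x y. x \<in> G a \<longrightarrow> y \<in> G b \<longrightarrow> br x y = - sc (eps a b) (br y x)) \<and>
     (\<forall>a b c x y z. x \<in> G a \<longrightarrow> y \<in> G b \<longrightarrow> z \<in> G c \<longrightarrow>
        sc (eps c a) (br (\<alpha> x) (br y z)) + sc (eps a b) (br (\<alpha> y) (br z x))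
        + sc (eps b c) (br (\<alpha> z) (br x y)) = 0)"
    using assms(1) unfolding color_hom_lie_def .
  have gr: "graded sc G" using A by (elim conjE)
  have bic: "bicharacter eps" using A by (elim conjE)
  have ebl: "even_bilinear sc G br" using A by (elim conjE)
  have eal: "even_linear sc sc G G \<alpha>" using A by (elim conjE)
  have asym0: "\<forall>a b x y. x \<in> G a \<longrightarrow> y \<in> G b \<longrightarrow> br x y = - sc (eps a b) (br y x)"
    using A by (elim conjE)
  have jac0: "\<forall>a b c x y z. x \<in> G a \<longrightarrow> y \<in> G b \<longrightarrow> z \<in> G c \<longrightarrow>
        sc (eps c a) (br (\<alpha> x) (br y z)) + sc (eps a b) (br (\<alpha> y) (br z x))
        + sc (eps b c) (br (\<alpha> z) (br x y)) = 0"
    using A by (elim conjE)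
  have asym: "\<And>a b x y. x \<in> G a \<Longrightarrow> y \<in> G b \<Longrightarrow> br x y = - sc (eps a b) (br y x)"
    using asym0 by blast
  have jac: "\<And>a b c x y z. x \<in> G a \<Longrightarrow> y \<in> G b \<Longrightarrow> z \<in> G c \<Longrightarrow>
        sc (eps c a) (br (\<alpha> x) (br y z)) + sc (eps a b) (br (\<alpha> y) (br z x))
        + sc (eps b c) (br (\<alpha> z) (br x y)) = 0"
    using jac0 by blast
  have brl: "\<And>u. Vector_Spaces.linear sc sc (br u)"
    using ebl unfolding even_bilinear_def by blast
  have brl2: "\<And>v. Vector_Spaces.linear sc sc (\<lambda>u. br u v)"
    using ebl unfolding even_bilinear_def by blast
  have brG: "\<And>a b x y. x \<in> G a \<Longrightarrow> y \<in> G b \<Longrightarrow> br x y \<in> G (a + b)"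
    using ebl unfolding even_bilinear_def by blast
  have alG: "\<And>a x. x \<in> G a \<Longrightarrow> \<alpha> x \<in> G a"
    using eal unfolding even_linear_def by blast
  have grM: "graded sm GM"
    using assms(2) unfolding representation_def by blast
  have rhol: "\<And>m. Vector_Spaces.linear sc sm (\<lambda>x. \<rho> x m)"
    using assms(2) unfolding representation_def by blast
  have rhor: "\<And>x. Vector_Spaces.linear sm sm (\<rho> x)"
    using assms(2) unfolding representation_def by blast
  have rep0: "\<forall>a b x y m. x \<in> G a \<longrightarrow> y \<in> G b \<longrightarrow>
        \<rho> (br x y) (\<beta> m) = \<rho> (\<alpha> x) (\<rho> y m) - sm (eps a b) (\<rho> (\<alpha> y) (\<rho> x m))"
    using assms(2) unfolding representation_def by (elim conjE)
  have rep: "\<And>a b x y m. x \<in> G a \<Longrightarrow> y \<in> G b \<Longrightarrow>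
        \<rho> (br x y) (\<beta> m) = \<rho> (\<alpha> x) (\<rho> y m) - sm (eps a b) (\<rho> (\<alpha> y) (\<rho> x m))"
    using rep0 by blast
  have phil: "Vector_Spaces.linear sc sm \<phi>" and phi_alpha: "\<And>u. \<phi> (\<alpha> u) = \<beta> (\<phi> u)"
    using assms(3) unfolding cochain1_hom_def by blast+
  have VM: "vector_space sm" using grM unfolding graded_def by blast
  have rho_add: "\<And>w u v. \<rho> w (u + v) = \<rho> w u + \<rho> w v"
    and rho_sc: "\<And>w k u. \<rho> w (sm k u) = sm k (\<rho> w u)"
    using rhor unfolding linear_iff by simp_all
  have phi_add: "\<And>u v. \<phi> (u + v) = \<phi> u + \<phi> v"
    and phi_sc: "\<And>k u. \<phi> (sc k u) = sm k (\<phi> u)"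
    using phil unfolding linear_iff by simp_all
  have brsc: "\<And>u k v. br u (sc k v) = sc k (br u v)"
    using brl unfolding linear_iff by blast
  have brneg: "\<And>u v. br u (- v) = - br u v"
    by (rule module_hom.neg[OF brl[unfolded linear_iff_module_hom]])
  have z1: "\<And>m. \<rho> 0 m = 0" by (rule module_hom.zero[OF rhol[unfolded linear_iff_module_hom], simplified])
  have z2: "\<And>w. \<rho> w 0 = 0" by (rule module_hom.zero[OF rhor[unfolded linear_iff_module_hom], simplified])
  have z3: "\<phi> 0 = 0" by (rule module_hom.zero[OF phil[unfolded linear_iff_module_hom], simplified])
  have z4: "\<And>v. br 0 v = 0" by (rule module_hom.zero[OF brl2[unfolded linear_iff_module_hom], simplified])
  have z5: "\<And>u. br u 0 = 0" by (rule module_hom.zero[OF brl[unfolded linear_iff_module_hom], simplified])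
  have z6: "\<And>k. sm k 0 = 0"
  proof -
    interpret M: vector_space sm by (rule VM)
    show "\<And>k. sm k 0 = 0" by simp
  qed
  note d1 = delta1_hom[where \<rho>=\<rho> and \<phi>=\<phi> and br=br and sm=sm and eps=eps and d=d, OF gr _ _ z1 z2 z3 z4 z5 z6]
  have summand: "sm (eps d a0) (\<rho> (\<alpha> y0) (delta1 G br eps sm \<rho> \<phi> d y1 y2))
        - sm (eps (d + a0) a1) (\<rho> (\<alpha> y1) (delta1 G br eps sm \<rho> \<phi> d y0 y2))
        + sm (eps (d + a0 + a1) a2) (\<rho> (\<alpha> y2) (delta1 G br eps sm \<rho> \<phi> d y0 y1))
        - delta1 G br eps sm \<rho> \<phi> d (br y0 y1) (\<alpha> y2)
        + sm (eps a1 a2) (delta1 G br eps sm \<rho> \<phi> d (br y0 y2) (\<alpha> y1))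
        + delta1 G br eps sm \<rho> \<phi> d (\<alpha> y0) (br y1 y2) = 0"
    if y0: "y0 \<in> G a0" and y1: "y1 \<in> G a1" and y2: "y2 \<in> G a2" for a0 a1 a2 y0 y1 y2
    unfolding d1[OF y1 y2] d1[OF y0 y2] d1[OF y0 y1] d1[OF brG[OF y0 y1] alG[OF y2]]
      d1[OF brG[OF y0 y2] alG[OF y1]] d1[OF alG[OF y0] brG[OF y1 y2]]
    by (rule core[where sm=sm and eps=eps and sc=sc and d=d and \<rho>=\<rho> and \<phi>=\<phi> and \<alpha>=\<alpha> and \<beta>=\<beta>
          and G=G and br=br and x=y0 and y=y1 and z=y2 and a=a0 and b=a1 and c=a2,
          OF VM bic rho_add rho_sc phi_add phi_sc phi_alpha rep asym jac brG alG brsc brneg y0 y1 y2])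
  show ?thesis
    unfolding delta2_def Let_def
    by (intro sum.neutral ballI) (rule summand[OF comp_in[OF gr] comp_in[OF gr] comp_in[OF gr]])
qed

end
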